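(* Let $q>1$. The maximum success probability of any strategy for the New Hats-on-a-line Game with $q$ hat colours and two players is $1-\left(\frac{q-1}{q}\right)^{2}=\frac{2q-1}{q^2}$.
   Context: The New Hats-on-a-line Game with $q$ colours and $n$ players: players $P_1,\dots,P_n$ stand in a line, and each player $P_i$ receives a hat whose colour $c_i$ is chosen uniformly at random from a fixed set of $q$ colours, independently of the other hats. Player $P_i$ sees exactly the hat colours $c_{i+1},\dots,c_n$. The players respond sequentially in the order $P_1,\dots,P_n$; each response is either a colour (a guess of one's own hat colour) or "pass", and each player hears all previous responses. No other communication is allowed, apart from agreeing on a strategy beforehand. A strategy specifies, for each player $P_i$, his response as a function of the colours he sees and the responses he has heard. The players win if at least one player guesses correctly and no player guesses incorrectly; the success probability of a strategy is the probability that the players win. Here $n=2$. *)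

theory Defs
  imports Complex_Main "HOL-Library.Cardinality"
begin

text \<open>A response is 'c option: None = pass, Some c = guess colour c.
  Player 1 sees c2 only; player 2 sees nothing and hears player 1's response.\<close>

definition wins2 :: "('c \<Rightarrow> 'c option) \<Rightarrow> ('c option \<Rightarrow> 'c option) \<Rightarrow> 'c \<Rightarrow> 'c \<Rightarrow> bool" where
  "wins2 s1 s2 c1 c2 =
     (let r1 = s1 c2; r2 = s2 r1 in
        (r1 = Some c1 \<or> r2 = Some c2) \<and>
        (r1 = None \<or> r1 = Some c1) \<and> (r2 = None \<or> r2 = Some c2))"

definition success_prob2 :: "('c::finite \<Rightarrow> 'c option) \<Rightarrow> ('c option \<Rightarrow> 'c option) \<Rightarrow> real" where
  "success_prob2 s1 s2 =
     real (card {p :: 'c \<times> 'c. wins2 s1 s2 (fst p) (snd p)}) / real (card (UNIV :: ('c \<times> 'c) set))"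

end

theory Submission
  imports Defs
begin

lemma upper:
  fixes s1 :: "'c::finite \<Rightarrow> 'c option" and s2 :: "'c option \<Rightarrow> 'c option"
  shows "card {p :: 'c \<times> 'c. wins2 s1 s2 (fst p) (snd p)} \<le> 2 * CARD('c) - 1"
proof -
  define K where "K = {c2::'c. s2 None = Some c2 \<and> s1 c2 = None}"
  define A where "A = (UNIV::'c set) \<times> K"
  define B where "B = {p::'c\<times>'c. s1 (snd p) = Some (fst p)}"
  have sub: "{p :: 'c \<times> 'c. wins2 s1 s2 (fst p) (snd p)} \<subseteq> A \<union> B"
    by (auto simp: wins2_def A_def B_def K_def Let_def split: option.splits)
  have K1: "card K \<le> 1"
  proof -
    have "K \<subseteq> {the (s2 None)}" by (auto simp: K_def)
    hence "card K \<le> card {the (s2 None)}" by (intro card_mono) auto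
    thus ?thesis by simp
  qed
  have cA: "card A = CARD('c) * card K" by (simp add: A_def card_cartesian_product)
  have "inj_on snd B" by (auto simp: B_def inj_on_def prod_eq_iff)
  hence "card B = card (snd ` B)" by (simp add: card_image)
  also have "snd ` B \<subseteq> UNIV - K" by (auto simp: B_def K_def)
  hence "card (snd ` B) \<le> card (UNIV - K)" by (intro card_mono) auto
  also have "card (UNIV - K) = CARD('c) - card K" by (simp add: card_Diff_subset)
  finally have cB: "card B \<le> CARD('c) - card K" .
  have "card {p :: 'c \<times> 'c. wins2 s1 s2 (fst p) (snd p)} \<le> card (A \<union> B)"
    by (intro card_mono sub) auto
  also have "\<dots> \<le> card A + card B" by (rule card_Un_le)
  also have "\<dots> \<le> 2 * CARD('c) - 1"
  proof (cases "card K = 0")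
    case True thus ?thesis using cA cB by simp
  next
    case False
    hence "card K = 1" using K1 by linarith
    thus ?thesis using cA cB by simp
  qed
  finally show ?thesis .
qed

lemma lower:
  assumes "CARD('c::finite) > 1"
  shows "\<exists>(s1 :: 'c \<Rightarrow> 'c option) s2. card {p :: 'c \<times> 'c. wins2 s1 s2 (fst p) (snd p)} = 2 * CARD('c) - 1"
proof -
  obtain a b :: 'c where ab: "a \<noteq> b"
  proof -
    have "\<not> card (UNIV::'c set) \<le> Suc 0" using assms by simp
    then obtain a b :: 'c where "a \<noteq> b" using card_le_Suc0_iff_eq[of "UNIV::'c set"] by auto
    thus ?thesis using that by blast
  qed
  define s1 where "s1 = (\<lambda>c2::'c. if c2 = b then None else Some a)"
  define s2 where "s2 = (\<lambda>r::'c option. if r = None then Some b else None)"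
  have "{p :: 'c \<times> 'c. wins2 s1 s2 (fst p) (snd p)} = (UNIV \<times> {b}) \<union> ({a} \<times> (UNIV - {b}))"
    by (auto simp: wins2_def s1_def s2_def Let_def)
  moreover have "card ((UNIV::'c set) \<times> {b} \<union> ({a} \<times> (UNIV - {b}))) = CARD('c) + (CARD('c) - 1)"
    by (subst card_Un_disjoint) (auto simp: card_cartesian_product card_Diff_subset)
  ultimately show ?thesis using assms by (intro exI[of _ s1] exI[of _ s2]) simp
qed

theorem theorem3:
  fixes q :: nat
  assumes "CARD('c::finite) = q" and "q > 1"
  shows "Max {success_prob2 s1 s2 | (s1 :: 'c \<Rightarrow> 'c option) s2. True}
           = 1 - ((real q - 1) / real q) ^ 2
       \<and> 1 - ((real q - 1) / real q) ^ 2 = (2 * real q - 1) / (real q) ^ 2"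
proof -
  have q0: "real q > 0" using assms by simp
  have eq2: "1 - ((real q - 1) / real q) ^ 2 = (2 * real q - 1) / (real q) ^ 2"
    using q0 by (simp add: field_simps power2_eq_square)
  have cU: "real (card (UNIV :: ('c \<times> 'c) set)) = real q ^ 2"
    using assms(1) by (simp add: UNIV_Times_UNIV[symmetric] card_cartesian_product power2_eq_square del: UNIV_Times_UNIV)
  have qq: "real (2 * q - 1) = 2 * real q - 1" using assms by (simp add: of_nat_diff)
  let ?S = "{success_prob2 s1 s2 | (s1 :: 'c \<Rightarrow> 'c option) s2. True}"
  have fin: "finite ?S"
  proof -
    have "?S = (\<lambda>(s1,s2). success_prob2 s1 s2) ` (UNIV :: (('c \<Rightarrow> 'c option) \<times> ('c option \<Rightarrow> 'c option)) set)"
      by auto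
    thus ?thesis by simp
  qed
  have ub: "x \<le> (2 * real q - 1) / (real q) ^ 2" if xS: "x \<in> ?S" for x
  proof -
    obtain s1 :: "'c \<Rightarrow> 'c option" and s2 where x: "x = success_prob2 s1 s2" using xS by auto
    have "real (card {p :: 'c \<times> 'c. wins2 s1 s2 (fst p) (snd p)}) \<le> 2 * real q - 1"
      using upper[of s1 s2] assms(1) qq by (metis of_nat_le_iff)
    thus ?thesis unfolding x success_prob2_def cU using q0 by (simp add: divide_right_mono)
  qed
  obtain s1 :: "'c \<Rightarrow> 'c option" and s2 where
    w: "card {p :: 'c \<times> 'c. wins2 s1 s2 (fst p) (snd p)} = 2 * CARD('c) - 1"
    using lower[where 'c='c] assms by auto
  have mem: "(2 * real q - 1) / (real q) ^ 2 \<in> ?S"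
  proof -
    have "success_prob2 s1 s2 = (2 * real q - 1) / (real q) ^ 2"
      unfolding success_prob2_def cU w using assms(1) qq by simp
    thus ?thesis by (metis (mono_tags, lifting) mem_Collect_eq)
  qed
  have "Max ?S = (2 * real q - 1) / (real q) ^ 2"
    by (rule Max_eqI[OF fin ub mem])
  thus ?thesis using eq2 by simp
qed

end
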